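(* Consider $n$ buses with line susceptances $b_{il}=b_{li}\ge 0$ ($b_{ii}=0$; $b_{il}=0$ if there is no line), maximal voltage magnitudes $V_{\max,i}>0$, and an operating point $(V_0,\theta_0)\in\mathbb{R}^n\times\mathbb{R}^n$ satisfying Assumption A. Let $L_B$ be the matrix with entries $$L_{B,ij}=\frac{\partial}{\partial\theta_j}\sum_{l=1}^n V_{0,i}V_{0,l}b_{il}\sin(\theta_i-\theta_l)\Big|_{\theta=\theta_0},$$ let $\gamma_i:=2\sum_{j=1}^n V_{\max,i}V_{\max,j}b_{ij}$, assumed positive for all $i$, and $\Gamma=\operatorname{diag}(\gamma_1,\dots,\gamma_n)$. Then for any conformal partitioning (after a permutation of the bus indices) $$\Gamma=\begin{bmatrix}\Gamma_1&0\\0&\Gamma_2\end{bmatrix},\qquad L_B=\begin{bmatrix}L_{B,11}&L_{B,12}\\ L_{B,21}&L_{B,22}\end{bmatrix}$$ with $L_{B,22}$ invertible (the second block being allowed to be empty, in which case the Schur complement below is $L_B$ itself), $$0\preceq \Gamma_1^{-1/2}\big(L_{B,11}-L_{B,12}L_{B,22}^{-1}L_{B,21}\big)\Gamma_1^{-1/2}\preceq I.$$ In particular $\Gamma^{-1/2}L_B\Gamma^{-1/2}\in\mathcal{L}$.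
   Context: Assumption A: at the operating point, the angle difference $|\theta_{0,i}-\theta_{0,j}|$ across each transmission line (i.e. for each pair with $b_{ij}>0$) is less than $\pi/2$, and the voltage magnitude at each bus satisfies $0<V_{0,i}\le V_{\max,i}$. $\mathcal{L}:=\{L\in\mathbb{R}^{n\times n}: L=L^T,\ 0\preceq L\preceq I\}$. *)

theory Defs
  imports "HOL-Analysis.Analysis"
begin

text \<open>Buses are indexed by a finite type 'n (n = CARD('n)).
  Matrices are functions 'n \<Rightarrow> 'n \<Rightarrow> real; a block of a matrix is its
  restriction to index sets.\<close>

definition power_inj :: "('n::finite \<Rightarrow> 'n \<Rightarrow> real) \<Rightarrow> ('n \<Rightarrow> real) \<Rightarrow> ('n \<Rightarrow> real) \<Rightarrow> 'n \<Rightarrow> real" where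
  "power_inj b V \<theta> i = (\<Sum>l\<in>UNIV. V i * V l * b i l * sin (\<theta> i - \<theta> l))"

definition LB :: "('n::finite \<Rightarrow> 'n \<Rightarrow> real) \<Rightarrow> ('n \<Rightarrow> real) \<Rightarrow> ('n \<Rightarrow> real) \<Rightarrow> 'n \<Rightarrow> 'n \<Rightarrow> real" where
  "LB b V0 \<theta>0 i j = deriv (\<lambda>t. power_inj b V0 (\<theta>0(j := t)) i) (\<theta>0 j)"

definition gam :: "('n::finite \<Rightarrow> 'n \<Rightarrow> real) \<Rightarrow> ('n \<Rightarrow> real) \<Rightarrow> 'n \<Rightarrow> real" where
  "gam b Vmax i = 2 * (\<Sum>j\<in>UNIV. Vmax i * Vmax j * b i j)"

definition assumptionA :: "('n::finite \<Rightarrow> 'n \<Rightarrow> real) \<Rightarrow> ('n \<Rightarrow> real) \<Rightarrow> ('n \<Rightarrow> real) \<Rightarrow> ('n \<Rightarrow> real) \<Rightarrow> bool" where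
  "assumptionA b Vmax V0 \<theta>0 \<longleftrightarrow>
     (\<forall>i j. b i j > 0 \<longrightarrow> \<bar>\<theta>0 i - \<theta>0 j\<bar> < pi / 2) \<and>
     (\<forall>i. 0 < V0 i \<and> V0 i \<le> Vmax i)"

definition is_block_inverse :: "('n \<Rightarrow> 'n \<Rightarrow> real) \<Rightarrow> 'n set \<Rightarrow> ('n \<Rightarrow> 'n \<Rightarrow> real) \<Rightarrow> bool" where
  "is_block_inverse L S M \<longleftrightarrow>
     (\<forall>k\<in>S. \<forall>m\<in>S. (\<Sum>l\<in>S. L k l * M l m) = (if k = m then 1 else 0)) \<and>
     (\<forall>k\<in>S. \<forall>m\<in>S. (\<Sum>l\<in>S. M k l * L l m) = (if k = m then 1 else 0))"

text \<open>Schur complement L11 - L12 M L21, where the first block is T and M = L22^{-1}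
  for the second block S.\<close>
definition schur :: "('n \<Rightarrow> 'n \<Rightarrow> real) \<Rightarrow> 'n set \<Rightarrow> ('n \<Rightarrow> 'n \<Rightarrow> real) \<Rightarrow> 'n \<Rightarrow> 'n \<Rightarrow> real" where
  "schur L S M i j = L i j - (\<Sum>k\<in>S. \<Sum>l\<in>S. L i k * M k l * L l j)"

text \<open>Membership in the set \<open>\<L>\<close> for the block indexed by T:
  symmetric and 0 \<preceq> A \<preceq> I (Loewner order via quadratic forms).\<close>
definition in_calL :: "'n set \<Rightarrow> ('n \<Rightarrow> 'n \<Rightarrow> real) \<Rightarrow> bool" where
  "in_calL T A \<longleftrightarrow>
     (\<forall>i\<in>T. \<forall>j\<in>T. A i j = A j i) \<and>
     (\<forall>x::'n \<Rightarrow> real. 0 \<le> (\<Sum>i\<in>T. \<Sum>j\<in>T. x i * A i j * x j)) \<and>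
     (\<forall>x::'n \<Rightarrow> real. (\<Sum>i\<in>T. \<Sum>j\<in>T. x i * A i j * x j) \<le> (\<Sum>i\<in>T. x i ^ 2))"

definition gscale :: "('n \<Rightarrow> real) \<Rightarrow> ('n \<Rightarrow> 'n \<Rightarrow> real) \<Rightarrow> 'n \<Rightarrow> 'n \<Rightarrow> real" where
  "gscale g A i j = (1 / sqrt (g i)) * A i j * (1 / sqrt (g j))"

end

theory Submission
  imports Defs
begin


lemma LB_formula:
  fixes b :: "'n::finite \<Rightarrow> 'n \<Rightarrow> real"
  shows "LB b V0 \<theta>0 i j =
    (if i = j then (\<Sum>l\<in>UNIV. V0 i * V0 l * b i l * cos (\<theta>0 i - \<theta>0 l)) else 0)
    - V0 i * V0 j * b i j * cos (\<theta>0 i - \<theta>0 j)"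
proof -
  define d where "d k = (if k = j then 1 else (0::real))" for k
  define e where "e k = (if k = j then 0 else \<theta>0 k)" for k
  have upd: "(\<theta>0(j := t)) k = d k * t + e k" for t k by (simp add: d_def e_def)
  have "((\<lambda>t. power_inj b V0 (\<theta>0(j := t)) i) has_real_derivative
      (\<Sum>l\<in>UNIV. V0 i * V0 l * b i l * (cos (\<theta>0 i - \<theta>0 l) * (d i - d l)))) (at (\<theta>0 j))"
  proof -
    have "((\<lambda>t. \<Sum>l\<in>UNIV. V0 i * V0 l * b i l * sin ((d i * t + e i) - (d l * t + e l))) has_real_derivative
      (\<Sum>l\<in>UNIV. V0 i * V0 l * b i l * (cos ((d i * \<theta>0 j + e i) - (d l * \<theta>0 j + e l)) * (d i - d l)))) (at (\<theta>0 j))"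
      by (auto intro!: derivative_eq_intros simp: algebra_simps)
    moreover have "d k * \<theta>0 j + e k = \<theta>0 k" for k by (simp add: d_def e_def)
    ultimately show ?thesis unfolding power_inj_def upd by simp
  qed
  hence "LB b V0 \<theta>0 i j = (\<Sum>l\<in>UNIV. V0 i * V0 l * b i l * (cos (\<theta>0 i - \<theta>0 l) * (d i - d l)))"
    unfolding LB_def by (intro DERIV_imp_deriv) simp
  also have "\<dots> = (\<Sum>l\<in>UNIV. (if i = j then V0 i * V0 l * b i l * cos (\<theta>0 i - \<theta>0 l) else 0)
       - (if l = j then V0 i * V0 l * b i l * cos (\<theta>0 i - \<theta>0 l) else 0))"
    by (intro sum.cong) (auto simp: d_def)
  also have "\<dots> = (if i = j then (\<Sum>l\<in>UNIV. V0 i * V0 l * b i l * cos (\<theta>0 i - \<theta>0 l)) else 0)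
    - V0 i * V0 j * b i j * cos (\<theta>0 i - \<theta>0 j)"
    by (simp add: sum_subtractf)
  finally show ?thesis .
qed


lemma lap_Q:
  fixes c L :: "'n::finite \<Rightarrow> 'n \<Rightarrow> real"
  assumes L: "\<And>i j. L i j = (if i = j then (\<Sum>l\<in>UNIV. c i l) else 0) - c i j"
  shows "(\<Sum>i\<in>UNIV. \<Sum>j\<in>UNIV. w i * L i j * w j) = (\<Sum>i\<in>UNIV. \<Sum>l\<in>UNIV. c i l * w i * (w i - w l))"
proof -
  have "(\<Sum>j\<in>UNIV. w i * L i j * w j) = (\<Sum>l\<in>UNIV. c i l * w i * (w i - w l))" for i
  proof -
    have "(\<Sum>j\<in>UNIV. w i * L i j * w j) = (\<Sum>j\<in>UNIV. (if i = j then w i * (\<Sum>l\<in>UNIV. c i l) * w j else 0) - w i * c i j * w j)"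
      by (intro sum.cong) (auto simp: L algebra_simps)
    also have "\<dots> = w i * (\<Sum>l\<in>UNIV. c i l) * w i - (\<Sum>j\<in>UNIV. w i * c i j * w j)"
      by (simp add: sum_subtractf)
    also have "\<dots> = (\<Sum>l\<in>UNIV. c i l * w i * (w i - w l))"
      by (simp add: sum_distrib_left sum_distrib_right sum_subtractf[symmetric] algebra_simps)
    finally show ?thesis .
  qed
  thus ?thesis by simp
qed

lemma lap_bounds:
  fixes c L :: "'n::finite \<Rightarrow> 'n \<Rightarrow> real"
  assumes L: "\<And>i j. L i j = (if i = j then (\<Sum>l\<in>UNIV. c i l) else 0) - c i j"
    and csym: "\<And>i j. c i j = c j i" and cnn: "\<And>i j. 0 \<le> c i j"
  shows "0 \<le> (\<Sum>i\<in>UNIV. \<Sum>j\<in>UNIV. w i * L i j * w j)"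
    and "(\<Sum>i\<in>UNIV. \<Sum>j\<in>UNIV. w i * L i j * w j) \<le> (\<Sum>i\<in>UNIV. 2 * (\<Sum>l\<in>UNIV. c i l) * w i ^ 2)"
proof -
  let ?Q = "(\<Sum>i\<in>UNIV. \<Sum>j\<in>UNIV. w i * L i j * w j)"
  have q1: "?Q = (\<Sum>i\<in>UNIV. \<Sum>l\<in>UNIV. c i l * w i * (w i - w l))" by (rule lap_Q[OF L])
  have "(\<Sum>i\<in>UNIV. \<Sum>l\<in>UNIV. c i l * w i * (w i - w l)) = (\<Sum>l\<in>UNIV. \<Sum>i\<in>UNIV. c i l * w i * (w i - w l))"
    by (rule sum.swap)
  also have "\<dots> = (\<Sum>i\<in>UNIV. \<Sum>l\<in>UNIV. c i l * w l * (w l - w i))"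
    by (simp add: csym)
  finally have q2: "?Q = (\<Sum>i\<in>UNIV. \<Sum>l\<in>UNIV. c i l * w l * (w l - w i))" using q1 by simp
  have two: "2 * ?Q = (\<Sum>i\<in>UNIV. \<Sum>l\<in>UNIV. c i l * (w i - w l)^2)"
  proof -
    have "2 * ?Q = (\<Sum>i\<in>UNIV. \<Sum>l\<in>UNIV. c i l * w i * (w i - w l)) + (\<Sum>i\<in>UNIV. \<Sum>l\<in>UNIV. c i l * w l * (w l - w i))"
      using q1 q2 by simp
    also have "\<dots> = (\<Sum>i\<in>UNIV. \<Sum>l\<in>UNIV. c i l * (w i - w l)^2)"
      by (simp only: sum.distrib[symmetric]) (intro sum.cong refl, simp add: power2_eq_square algebra_simps)
    finally show ?thesis .
  qed
  have "0 \<le> (\<Sum>i\<in>UNIV. \<Sum>l\<in>UNIV. c i l * (w i - w l)^2)"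
    by (intro sum_nonneg mult_nonneg_nonneg cnn) simp
  thus "0 \<le> ?Q" using two by simp
  have "(\<Sum>i\<in>UNIV. \<Sum>l\<in>UNIV. c i l * (w i - w l)^2) \<le> (\<Sum>i\<in>UNIV. \<Sum>l\<in>UNIV. 2 * c i l * (w i)^2 + 2 * c i l * (w l)^2)"
  proof (intro sum_mono)
    fix i l
    have "(w i - w l)^2 \<le> 2 * (w i)^2 + 2 * (w l)^2" using zero_le_square[of "w i + w l"] by (simp add: power2_eq_square algebra_simps)
    from mult_left_mono[OF this cnn[of i l]] show "c i l * (w i - w l)^2 \<le> 2 * c i l * (w i)^2 + 2 * c i l * (w l)^2"
      by (simp add: algebra_simps)
  qed
  also have "\<dots> = (\<Sum>i\<in>UNIV. \<Sum>l\<in>UNIV. 2 * c i l * (w i)^2) + (\<Sum>i\<in>UNIV. \<Sum>l\<in>UNIV. 2 * c i l * (w l)^2)"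
    by (simp add: sum.distrib)
  also have "(\<Sum>i\<in>UNIV. \<Sum>l\<in>UNIV. 2 * c i l * (w l)^2) = (\<Sum>i\<in>UNIV. \<Sum>l\<in>UNIV. 2 * c i l * (w i)^2)"
    by (subst sum.swap) (simp add: csym)
  also have "(\<Sum>i\<in>UNIV. \<Sum>l\<in>UNIV. 2 * c i l * (w i)^2) = (\<Sum>i\<in>UNIV. 2 * (\<Sum>l\<in>UNIV. c i l) * w i ^ 2)"
    by (simp add: sum_distrib_left sum_distrib_right algebra_simps)
  finally show "?Q \<le> (\<Sum>i\<in>UNIV. 2 * (\<Sum>l\<in>UNIV. c i l) * w i ^ 2)" using two by simp
qed


lemma sum_split_S: "(\<Sum>i\<in>(UNIV::'n::finite set). f i) = (\<Sum>i\<in>-S. f i) + (\<Sum>i\<in>S. f i)"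
proof -
  have "(UNIV::'n set) = -S \<union> S" by auto
  hence "(\<Sum>i\<in>(UNIV::'n set). f i) = (\<Sum>i\<in>-S \<union> S. f i)" by simp
  also have "\<dots> = (\<Sum>i\<in>-S. f i) + (\<Sum>i\<in>S. f i)" by (rule sum.union_disjoint) auto
  finally show ?thesis .
qed

lemma restrictQ:
  fixes L :: "'n::finite \<Rightarrow> 'n \<Rightarrow> real"
  assumes "\<And>k. k \<notin> X \<Longrightarrow> w k = 0"
  shows "(\<Sum>i\<in>UNIV. \<Sum>j\<in>UNIV. w i * L i j * w j) = (\<Sum>i\<in>X. \<Sum>j\<in>X. w i * L i j * w j)"
proof -
  have "(\<Sum>i\<in>UNIV. \<Sum>j\<in>UNIV. w i * L i j * w j) = (\<Sum>i\<in>UNIV. \<Sum>j\<in>X. w i * L i j * w j)"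
    by (intro sum.cong refl sum.mono_neutral_right) (auto simp: assms)
  also have "\<dots> = (\<Sum>i\<in>X. \<Sum>j\<in>X. w i * L i j * w j)"
    by (intro sum.mono_neutral_right) (auto simp: assms)
  finally show ?thesis .
qed

context
  fixes L M :: "'n::finite \<Rightarrow> 'n \<Rightarrow> real" and S :: "'n set"
  assumes Lsym: "\<And>i j. L i j = L j i"
    and Lpsd: "\<And>w. 0 \<le> (\<Sum>i\<in>UNIV. \<Sum>j\<in>UNIV. w i * L i j * w j)"
    and inv: "is_block_inverse L S M"
begin

lemma M_sym: "k \<in> S \<Longrightarrow> l \<in> S \<Longrightarrow> M k l = M l k"
proof -
  assume k: "k \<in> S" and l: "l \<in> S"
  have LM: "\<And>a c. a \<in> S \<Longrightarrow> c \<in> S \<Longrightarrow> (\<Sum>p\<in>S. M a p * L p c) = (if a = c then 1 else 0)"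
    using inv unfolding is_block_inverse_def by blast
  have "M k l = (\<Sum>p\<in>S. M k p * (if p = l then 1 else 0))"
    using l by (simp add: if_distrib cong: if_cong)
  also have "\<dots> = (\<Sum>p\<in>S. M k p * (\<Sum>q\<in>S. M l q * L q p))"
    by (intro sum.cong refl) (use LM l in auto)
  also have "\<dots> = (\<Sum>q\<in>S. M l q * (\<Sum>p\<in>S. M k p * L p q))"
    apply (simp add: sum_distrib_left sum_distrib_right algebra_simps)
    apply (subst sum.swap)
    apply (intro sum.cong refl)
    apply (metis Lsym mult.commute mult.left_commute)
    done
  also have "\<dots> = (\<Sum>q\<in>S. M l q * (if k = q then 1 else 0))"
    by (intro sum.cong refl) (use LM k in auto)
  also have "\<dots> = M l k" using k by (simp add: if_distrib cong: if_cong)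
  finally show ?thesis .
qed


lemma block_bounds:
  fixes z :: "'n \<Rightarrow> real"
  defines "F \<equiv> (\<Sum>i\<in>-S. \<Sum>j\<in>-S. z i * schur L S M i j * z j)"
  shows "0 \<le> F" and "F \<le> (\<Sum>i\<in>-S. \<Sum>j\<in>-S. z i * L i j * z j)"
proof -
  define T where "T = -S"
  define A where "A = (\<Sum>i\<in>T. \<Sum>j\<in>T. z i * L i j * z j)"
  define u where "u k = (\<Sum>j\<in>T. L k j * z j)" for k
  define v where "v p = (\<Sum>l\<in>S. M p l * u l)" for p
  define P where "P = (\<Sum>k\<in>S. u k * v k)"
  have LM: "\<And>a c. a \<in> S \<Longrightarrow> c \<in> S \<Longrightarrow> (\<Sum>p\<in>S. L a p * M p c) = (if a = c then 1 else 0)"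
    using inv unfolding is_block_inverse_def by blast
  have FAP: "F = A - P"
  proof -
    have "F = A - (\<Sum>i\<in>T. \<Sum>j\<in>T. z i * (\<Sum>k\<in>S. \<Sum>l\<in>S. L i k * M k l * L l j) * z j)"
      unfolding F_def A_def T_def schur_def by (simp add: algebra_simps sum_subtractf)
    also have "(\<Sum>i\<in>T. \<Sum>j\<in>T. z i * (\<Sum>k\<in>S. \<Sum>l\<in>S. L i k * M k l * L l j) * z j)
        = (\<Sum>i\<in>T. \<Sum>j\<in>T. \<Sum>k\<in>S. \<Sum>l\<in>S. z i * L i k * M k l * L l j * z j)"
      by (simp add: sum_distrib_left sum_distrib_right algebra_simps)
    also have "\<dots> = (\<Sum>i\<in>T. \<Sum>k\<in>S. \<Sum>j\<in>T. \<Sum>l\<in>S. z i * L i k * M k l * L l j * z j)"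
      by (rule sum.cong[OF refl], rule sum.swap)
    also have "\<dots> = (\<Sum>i\<in>T. \<Sum>k\<in>S. \<Sum>l\<in>S. \<Sum>j\<in>T. z i * L i k * M k l * L l j * z j)"
      by (rule sum.cong[OF refl], rule sum.cong[OF refl], rule sum.swap)
    also have "\<dots> = (\<Sum>k\<in>S. \<Sum>i\<in>T. \<Sum>l\<in>S. \<Sum>j\<in>T. z i * L i k * M k l * L l j * z j)"
      by (rule sum.swap)
    also have "\<dots> = (\<Sum>k\<in>S. \<Sum>l\<in>S. \<Sum>i\<in>T. \<Sum>j\<in>T. z i * L i k * M k l * L l j * z j)"
      by (rule sum.cong[OF refl], rule sum.swap)
    also have "\<dots> = (\<Sum>k\<in>S. \<Sum>l\<in>S. u k * M k l * u l)"
      unfolding u_def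
      by (simp add: sum_distrib_left sum_distrib_right Lsym[of _ k for k] algebra_simps)
    also have "\<dots> = P"
      unfolding P_def v_def by (simp add: sum_distrib_left algebra_simps)
    finally show ?thesis .
  qed
  have uv: "u k = (\<Sum>p\<in>S. L k p * v p)" if k: "k \<in> S" for k
  proof -
    have "(\<Sum>p\<in>S. L k p * v p) = (\<Sum>p\<in>S. \<Sum>l\<in>S. L k p * M p l * u l)"
      unfolding v_def by (simp add: sum_distrib_left algebra_simps)
    also have "\<dots> = (\<Sum>l\<in>S. \<Sum>p\<in>S. L k p * M p l * u l)" by (rule sum.swap)
    also have "\<dots> = (\<Sum>l\<in>S. (\<Sum>p\<in>S. L k p * M p l) * u l)" by (simp add: sum_distrib_right)
    also have "\<dots> = (\<Sum>l\<in>S. (if k = l then 1 else 0) * u l)"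
      by (rule sum.cong[OF refl]) (simp add: LM k)
    also have "\<dots> = (\<Sum>l\<in>S. (if k = l then u l else 0))" by (rule sum.cong[OF refl]) simp
    also have "\<dots> = u k" using k by simp
    finally show ?thesis by simp
  qed
  have PQ: "P = (\<Sum>k\<in>S. \<Sum>p\<in>S. v k * L k p * v p)"
    unfolding P_def by (rule sum.cong[OF refl]) (simp add: uv sum_distrib_left algebra_simps)
  have P0: "0 \<le> P"
  proof -
    define v0 where "v0 k = (if k \<in> S then v k else 0)" for k
    have "(\<Sum>i\<in>UNIV. \<Sum>j\<in>UNIV. v0 i * L i j * v0 j) = (\<Sum>i\<in>S. \<Sum>j\<in>S. v0 i * L i j * v0 j)"
      by (rule restrictQ) (simp add: v0_def)
    also have "\<dots> = P" unfolding PQ v0_def by simp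
    finally show ?thesis using Lpsd[of v0] by simp
  qed
  define w where "w k = (if k \<in> S then - v k else z k)" for k
  have split4: "(\<Sum>i\<in>UNIV. \<Sum>j\<in>UNIV. w i * L i j * w j) =
     (\<Sum>i\<in>T. \<Sum>j\<in>T. w i * L i j * w j) + (\<Sum>i\<in>T. \<Sum>j\<in>S. w i * L i j * w j)
     + (\<Sum>i\<in>S. \<Sum>j\<in>T. w i * L i j * w j) + (\<Sum>i\<in>S. \<Sum>j\<in>S. w i * L i j * w j)"
    unfolding T_def by (simp add: sum_split_S[of _ S] sum.distrib)
  have t1: "(\<Sum>i\<in>T. \<Sum>j\<in>T. w i * L i j * w j) = A"
    unfolding A_def w_def T_def by simp
  have t2: "(\<Sum>i\<in>T. \<Sum>j\<in>S. w i * L i j * w j) = - P"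
  proof -
    have "(\<Sum>i\<in>T. \<Sum>j\<in>S. w i * L i j * w j) = (\<Sum>i\<in>T. \<Sum>j\<in>S. - (z i * L i j * v j))"
      unfolding w_def T_def by simp
    also have "\<dots> = (\<Sum>j\<in>S. \<Sum>i\<in>T. - (z i * L i j * v j))" by (rule sum.swap)
    also have "\<dots> = (\<Sum>j\<in>S. - (u j * v j))"
      unfolding u_def by (simp add: sum_distrib_left sum_distrib_right sum_negf Lsym[of _ j for j] algebra_simps)
    also have "\<dots> = - P" unfolding P_def by (simp add: sum_negf)
    finally show ?thesis .
  qed
  have t3: "(\<Sum>i\<in>S. \<Sum>j\<in>T. w i * L i j * w j) = - P"
  proof -
    have "(\<Sum>i\<in>S. \<Sum>j\<in>T. w i * L i j * w j) = (\<Sum>i\<in>S. \<Sum>j\<in>T. - (v i * L i j * z j))"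
      unfolding w_def T_def by simp
    also have "\<dots> = (\<Sum>i\<in>S. - (u i * v i))"
      unfolding u_def by (simp add: sum_distrib_left sum_negf algebra_simps)
    also have "\<dots> = - P" unfolding P_def by (simp add: sum_negf)
    finally show ?thesis .
  qed
  have t4: "(\<Sum>i\<in>S. \<Sum>j\<in>S. w i * L i j * w j) = P"
    unfolding PQ w_def by simp
  have "(\<Sum>i\<in>UNIV. \<Sum>j\<in>UNIV. w i * L i j * w j) = F"
    using split4 t1 t2 t3 t4 FAP by simp
  thus "0 \<le> F" using Lpsd[of w] by simp
  show "F \<le> (\<Sum>i\<in>-S. \<Sum>j\<in>-S. z i * L i j * z j)"
    using FAP P0 unfolding A_def T_def by simp
qed
end


theorem lemma1:
  fixes b :: "'n::finite \<Rightarrow> 'n \<Rightarrow> real"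
    and Vmax V0 \<theta>0 :: "'n \<Rightarrow> real"
  assumes b_sym: "\<forall>i l. b i l = b l i"
    and b_nonneg: "\<forall>i l. 0 \<le> b i l"
    and b_diag: "\<forall>i. b i i = 0"
    and Vmax_pos: "\<forall>i. 0 < Vmax i"
    and A: "assumptionA b Vmax V0 \<theta>0"
    and gam_pos: "\<forall>i. 0 < gam b Vmax i"
  shows "(\<forall>S M. is_block_inverse (LB b V0 \<theta>0) S M \<longrightarrow>
            in_calL (- S) (gscale (gam b Vmax) (schur (LB b V0 \<theta>0) S M)))
         \<and> in_calL UNIV (gscale (gam b Vmax) (LB b V0 \<theta>0))"
proof -
  define c where "c i l = V0 i * V0 l * b i l * cos (\<theta>0 i - \<theta>0 l)" for i l
  define L where "L = LB b V0 \<theta>0"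
  define g where "g = gam b Vmax"
  have Leq: "\<And>i j. L i j = (if i = j then (\<Sum>l\<in>UNIV. c i l) else 0) - c i j"
    unfolding L_def c_def by (rule LB_formula)
  have A1: "\<And>i j. b i j > 0 \<Longrightarrow> \<bar>\<theta>0 i - \<theta>0 j\<bar> < pi / 2" and A2: "\<And>i. 0 < V0 i \<and> V0 i \<le> Vmax i"
    using A unfolding assumptionA_def by auto
  have csym: "\<And>i j. c i j = c j i"
  proof -
    fix i j
    have "cos (\<theta>0 j - \<theta>0 i) = cos (\<theta>0 i - \<theta>0 j)"
      by (metis cos_minus minus_diff_eq)
    thus "c i j = c j i" unfolding c_def using b_sym by (simp add: algebra_simps)
  qed
  have cnn: "\<And>i j. 0 \<le> c i j"
  proof -
    fix i j
    show "0 \<le> c i j"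
    proof (cases "b i j = 0")
      case True thus ?thesis by (simp add: c_def)
    next
      case False
      hence "b i j > 0" using b_nonneg[rule_format, of i j] by linarith
      hence "\<bar>\<theta>0 i - \<theta>0 j\<bar> < pi / 2" by (rule A1)
      hence "- (pi/2) < \<theta>0 i - \<theta>0 j" "\<theta>0 i - \<theta>0 j < pi/2" by linarith+
      hence "0 < cos (\<theta>0 i - \<theta>0 j)" by (rule cos_gt_zero_pi)
      thus ?thesis unfolding c_def using A2[of i] A2[of j] \<open>b i j > 0\<close> by simp
    qed
  qed
  have cle: "\<And>i j. c i j \<le> Vmax i * Vmax j * b i j"
  proof -
    fix i j
    have v: "V0 i * V0 j \<le> Vmax i * Vmax j"
      using A2[of i] A2[of j] by (intro mult_mono) auto
    have "c i j = (V0 i * V0 j * b i j) * cos (\<theta>0 i - \<theta>0 j)" by (simp add: c_def)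
    also have "\<dots> \<le> (V0 i * V0 j * b i j) * 1"
      using A2[of i] A2[of j] b_nonneg by (intro mult_left_mono) auto
    also have "\<dots> \<le> Vmax i * Vmax j * b i j"
      using v b_nonneg by (simp add: mult_right_mono)
    finally show "c i j \<le> Vmax i * Vmax j * b i j" .
  qed
  have Lsym: "\<And>i j. L i j = L j i" using Leq csym by simp
  have Lpsd: "\<And>w. 0 \<le> (\<Sum>i\<in>UNIV. \<Sum>j\<in>UNIV. w i * L i j * w j)"
    by (rule lap_bounds(1)[OF Leq csym cnn])
  have Lup: "(\<Sum>i\<in>UNIV. \<Sum>j\<in>UNIV. w i * L i j * w j) \<le> (\<Sum>i\<in>UNIV. g i * w i ^ 2)" for w
  proof -
    have "(\<Sum>i\<in>UNIV. \<Sum>j\<in>UNIV. w i * L i j * w j) \<le> (\<Sum>i\<in>UNIV. 2 * (\<Sum>l\<in>UNIV. c i l) * w i ^ 2)"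
      by (rule lap_bounds(2)[OF Leq csym cnn])
    also have "\<dots> \<le> (\<Sum>i\<in>UNIV. g i * w i ^ 2)"
    proof (rule sum_mono)
      fix i
      have "(\<Sum>l\<in>UNIV. c i l) \<le> (\<Sum>l\<in>UNIV. Vmax i * Vmax l * b i l)" by (rule sum_mono) (rule cle)
      hence "2 * (\<Sum>l\<in>UNIV. c i l) \<le> g i" unfolding g_def gam_def by simp
      thus "2 * (\<Sum>l\<in>UNIV. c i l) * w i ^ 2 \<le> g i * w i ^ 2" by (intro mult_right_mono) auto
    qed
    finally show ?thesis .
  qed
  have gpos: "\<And>i. 0 < g i" using gam_pos by (simp add: g_def)
  have main: "in_calL (- S) (gscale g (schur L S M))" if inv: "is_block_inverse L S M" for S M
  proof -
    have Msym: "\<And>k l. k \<in> S \<Longrightarrow> l \<in> S \<Longrightarrow> M k l = M l k"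
      by (rule M_sym[OF Lsym Lpsd inv])
    have scsym: "schur L S M i j = schur L S M j i" for i j
    proof -
      have "(\<Sum>k\<in>S. \<Sum>l\<in>S. L j k * M k l * L l i) = (\<Sum>l\<in>S. \<Sum>k\<in>S. L j k * M k l * L l i)"
        by (rule sum.swap)
      also have "\<dots> = (\<Sum>k\<in>S. \<Sum>l\<in>S. L i k * M k l * L l j)"
        by (intro sum.cong refl) (simp add: Msym Lsym[of j] Lsym[of _ i])
      finally show ?thesis unfolding schur_def using Lsym[of i j] by simp
    qed
    have "(\<forall>i\<in>-S. \<forall>j\<in>-S. gscale g (schur L S M) i j = gscale g (schur L S M) j i)"
      unfolding gscale_def using scsym by simp
    moreover have "0 \<le> (\<Sum>i\<in>-S. \<Sum>j\<in>-S. x i * gscale g (schur L S M) i j * x j) \<and>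
       (\<Sum>i\<in>-S. \<Sum>j\<in>-S. x i * gscale g (schur L S M) i j * x j) \<le> (\<Sum>i\<in>-S. x i ^ 2)" for x :: "'n \<Rightarrow> real"
    proof -
      define z where "z i = x i / sqrt (g i)" for i
      have eq: "(\<Sum>i\<in>-S. \<Sum>j\<in>-S. x i * gscale g (schur L S M) i j * x j)
          = (\<Sum>i\<in>-S. \<Sum>j\<in>-S. z i * schur L S M i j * z j)"
        unfolding gscale_def z_def by (simp add: algebra_simps)
      have lo: "0 \<le> (\<Sum>i\<in>-S. \<Sum>j\<in>-S. z i * schur L S M i j * z j)"
        by (rule block_bounds(1)[OF Lsym Lpsd inv])
      define z0 where "z0 i = (if i \<in> -S then z i else 0)" for i
      have "(\<Sum>i\<in>-S. \<Sum>j\<in>-S. z i * schur L S M i j * z j) \<le> (\<Sum>i\<in>-S. \<Sum>j\<in>-S. z i * L i j * z j)"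
        by (rule block_bounds(2)[OF Lsym Lpsd inv])
      also have "\<dots> = (\<Sum>i\<in>-S. \<Sum>j\<in>-S. z0 i * L i j * z0 j)" by (simp add: z0_def)
      also have "\<dots> = (\<Sum>i\<in>UNIV. \<Sum>j\<in>UNIV. z0 i * L i j * z0 j)"
        by (rule restrictQ[symmetric]) (simp add: z0_def)
      also have "\<dots> \<le> (\<Sum>i\<in>UNIV. g i * z0 i ^ 2)" by (rule Lup)
      also have "\<dots> = (\<Sum>i\<in>-S. g i * z0 i ^ 2)"
        by (rule sum.mono_neutral_right) (auto simp: z0_def)
      also have "\<dots> = (\<Sum>i\<in>-S. x i ^ 2)"
      proof (rule sum.cong[OF refl])
        fix i assume "i \<in> -S"
        have "g i * (x i / sqrt (g i))^2 = x i ^ 2"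
          using gpos[of i] by (simp add: power_divide)
        thus "g i * z0 i ^ 2 = x i ^ 2" using \<open>i \<in> -S\<close> by (simp add: z0_def z_def)
      qed
      finally show ?thesis using eq lo by simp
    qed
    ultimately show ?thesis unfolding in_calL_def by blast
  qed
  have "is_block_inverse L {} M" for M unfolding is_block_inverse_def by simp
  from main[OF this] have "in_calL UNIV (gscale g (schur L {} M))" for M by simp
  moreover have "schur L {} M = L" for M by (rule ext)+ (simp add: schur_def)
  ultimately have "in_calL UNIV (gscale g L)" by metis
  with main show ?thesis unfolding L_def g_def by blast
qed

end
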